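(* In the D-RR setting under the nonconvex assumptions, suppose $\alpha_t=\alpha$ for all $t$ with $0<\alpha\le\frac{1}{mL}$. Then for every epoch $t$ (and every realization of the permutations), $$f(\bar x_{t+1}^0)\le f(\bar x_t^0)-\frac{\alpha m}{2}\|\nabla f(\bar x_t^0)\|^2+\frac{L^2\alpha}{n}\sum_{\ell=0}^{m-1}\|\mathbf x_t^\ell-\mathbf 1(\bar x_t^\ell)^\intercal\|^2+\alpha L^2\sum_{\ell=0}^{m-1}\|\bar x_t^\ell-\bar x_t^0\|^2 .$$
   Context: D-RR setting. Let $n,m,p\ge1$ be integers and $[k]=\{1,\dots,k\}$. For $i\in[n]$, $\ell\in[m]$ let $f_{i,\ell}:\mathbb{R}^p\to\mathbb{R}$ be differentiable; $f_i:=\frac1m\sum_{\ell=1}^m f_{i,\ell}$, $f:=\frac1n\sum_{i=1}^n f_i$. Let $W=(w_{ij})\in\mathbb{R}^{n\times n}$ be nonnegative, symmetric, with $W\mathbf 1=\mathbf 1$, compliant with an undirected connected graph on $[n]$ (for $i\ne j$, $w_{ij}>0$ iff $\{i,j\}$ is an edge); $\rho_w$ is the spectral norm of $W-\frac1n\mathbf 1\mathbf 1^\intercal$. The D-RR algorithm: given initial points $x_{i,0}\in\mathbb{R}^p$ and stepsizes $\alpha_t>0$, at each epoch $t=0,1,\dots$ each agent $i$ draws a permutation $(\pi^i_0,\dots,\pi^i_{m-1})$ of $[m]$ uniformly at random, independently across agents and epochs; sets $x^0_{i,t}=x_{i,t}$; for $\ell=0,\dots,m-1$ sets $x^{\ell+1}_{i,t}=\sum_{j=1}^n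 w_{ij}\big(x^\ell_{j,t}-\alpha_t\nabla f_{j,\pi^j_\ell}(x^\ell_{j,t})\big)$; sets $x_{i,t+1}=x^m_{i,t}$. Notation: $\mathbf{x}_t^\ell\in\mathbb{R}^{n\times p}$ has $i$-th row $(x^\ell_{i,t})^\intercal$; $\bar x_t^\ell=\frac1n\sum_i x^\ell_{i,t}$; $\mathbf 1(\bar x_t^\ell)^\intercal$ is the $n\times p$ matrix all of whose rows equal $(\bar x_t^\ell)^\intercal$; $\|\cdot\|$ is Euclidean/Frobenius norm. Nonconvex assumptions: each $f_{i,\ell}$ has $L$-Lipschitz gradient and satisfies $f_{i,\ell}\ge\bar f_{i,\ell}$ for some constant $\bar f_{i,\ell}\in\mathbb{R}$. *)

theory Defs
  imports "HOL-Analysis.Analysis"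
begin

text \<open>Agents are indexed by 0..<n, component functions by 0..<m.
  The weight matrix is W :: nat => nat => real (entries W i j for i,j < n).\<close>

definition mixing_matrix :: "nat \<Rightarrow> (nat \<Rightarrow> nat \<Rightarrow> real) \<Rightarrow> bool" where
  "mixing_matrix n W \<longleftrightarrow>
     (\<forall>i<n. \<forall>j<n. 0 \<le> W i j \<and> W i j = W j i) \<and>
     (\<forall>i<n. (\<Sum>j<n. W i j) = 1)"

definition graph_edges :: "nat \<Rightarrow> (nat \<Rightarrow> nat \<Rightarrow> real) \<Rightarrow> (nat \<times> nat) set" where
  "graph_edges n W = {(i, j). i < n \<and> j < n \<and> i \<noteq> j \<and> 0 < W i j}"

definition graph_connected :: "nat \<Rightarrow> (nat \<Rightarrow> nat \<Rightarrow> real) \<Rightarrow> bool" where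
  "graph_connected n W \<longleftrightarrow> (\<forall>i<n. \<forall>j<n. (i, j) \<in> (graph_edges n W)\<^sup>*)"

end

theory Submission
  imports Defs
begin

lemma descent:
  fixes g :: "real^'p \<Rightarrow> real" and G :: "real^'p \<Rightarrow> real^'p"
  assumes d: "\<And>z. (g has_derivative (\<lambda>h. G z \<bullet> h)) (at z)"
     and l: "\<And>z w. norm (G z - G w) \<le> L * norm (z - w)"
  shows "g y \<le> g x + G x \<bullet> (y - x) + L/2 * (norm (y-x))\<^sup>2"
proof -
  define h where "h = y - x"
  define \<phi> where "\<phi> s = g (x + s *\<^sub>R h) - s * (G x \<bullet> h) - L/2 * s\<^sup>2 * (norm h)\<^sup>2" for s
  have D: "(\<phi> has_real_derivative (G (x + s *\<^sub>R h) \<bullet> h - G x \<bullet> h - L * s * (norm h)\<^sup>2)) (at s)" for s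
  proof -
    have 1: "((\<lambda>s. x + s *\<^sub>R h) has_derivative (\<lambda>s. s *\<^sub>R h)) (at s)"
      by (auto intro!: derivative_eq_intros)
    have 2: "((\<lambda>s. g (x + s *\<^sub>R h)) has_real_derivative (G (x + s *\<^sub>R h) \<bullet> h)) (at s)"
      unfolding has_field_derivative_def
      by (rule has_derivative_eq_rhs[OF has_derivative_compose[OF 1 d]]) (auto simp: fun_eq_iff)
    have 3: "((\<lambda>s. s * (G x \<bullet> h) + L/2 * s\<^sup>2 * (norm h)\<^sup>2) has_real_derivative (G x \<bullet> h + L * s * (norm h)\<^sup>2)) (at s)"
      by (auto intro!: derivative_eq_intros simp: algebra_simps power2_eq_square)
    have e: "\<phi> = (\<lambda>s. g (x + s *\<^sub>R h) - (s * (G x \<bullet> h) + L/2 * s\<^sup>2 * (norm h)\<^sup>2))"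
      unfolding \<phi>_def by (auto simp: fun_eq_iff)
    show ?thesis unfolding e using DERIV_diff[OF 2 3] by (simp add: algebra_simps)
  qed
  have "\<phi> 1 \<le> \<phi> 0"
  proof (rule DERIV_nonpos_imp_nonincreasing[of 0 1])
    fix s :: real assume s: "0 \<le> s" "s \<le> 1"
    have "G (x + s *\<^sub>R h) \<bullet> h - G x \<bullet> h = (G (x + s *\<^sub>R h) - G x) \<bullet> h" by (simp add: inner_diff_left)
    also have "\<dots> \<le> norm (G (x + s *\<^sub>R h) - G x) * norm h" by (rule Cauchy_Schwarz_ineq2[THEN order_trans[OF abs_ge_self]])
    also have "\<dots> \<le> L * norm (s *\<^sub>R h) * norm h" using l[of "x + s *\<^sub>R h" x] by (simp add: mult_right_mono)
    also have "\<dots> = L * s * (norm h)\<^sup>2" using s by (simp add: power2_eq_square)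
    finally show "\<exists>y. (\<phi> has_real_derivative y) (at s) \<and> y \<le> 0" using D[of s] by (intro exI[of _ "G (x + s *\<^sub>R h) \<bullet> h - G x \<bullet> h - L * s * (norm h)\<^sup>2"]) simp
  qed simp
  then show ?thesis unfolding \<phi>_def h_def by simp
qed
lemma avg_sq:
  fixes v :: "nat \<Rightarrow> 'a::real_normed_vector"
  shows "(norm ((1/real k) *\<^sub>R (\<Sum>i<k. v i)))\<^sup>2 \<le> (1/real k) * (\<Sum>i<k. (norm (v i))\<^sup>2)"
proof (cases "k = 0")
  case True then show ?thesis by simp
next
  case False
  have "norm ((1/real k) *\<^sub>R (\<Sum>i<k. v i)) \<le> (1/real k) * (\<Sum>i<k. norm (v i))"
    by (simp add: divide_right_mono norm_sum)
  then have "(norm ((1/real k) *\<^sub>R (\<Sum>i<k. v i)))\<^sup>2 \<le> ((1/real k) * (\<Sum>i<k. norm (v i)))\<^sup>2"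
    by (rule power_mono) simp
  also have "\<dots> = (1/real k)\<^sup>2 * (\<Sum>i<k. norm (v i))\<^sup>2" by (simp add: power_mult_distrib power_divide)
  also have "\<dots> \<le> (1/real k)\<^sup>2 * ((\<Sum>i<k. (norm (v i))\<^sup>2) * real k)"
    using sum_squared_le_sum_of_squares[of "\<lambda>i. norm (v i)" "{..<k}"] by (intro mult_left_mono) auto
  also have "\<dots> = (1/real k) * (\<Sum>i<k. (norm (v i))\<^sup>2)" using False by (simp add: power2_eq_square)
  finally show ?thesis .
qed


theorem lemma13:
  fixes n m :: nat and L \<alpha> :: real
    and fs :: "nat \<Rightarrow> nat \<Rightarrow> real ^ 'p \<Rightarrow> real"
    and grad :: "nat \<Rightarrow> nat \<Rightarrow> real ^ 'p \<Rightarrow> real ^ 'p"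
    and W :: "nat \<Rightarrow> nat \<Rightarrow> real"
    and \<pi> :: "nat \<Rightarrow> nat \<Rightarrow> nat \<Rightarrow> nat"
    and X :: "nat \<Rightarrow> nat \<Rightarrow> nat \<Rightarrow> real ^ 'p"
    and t :: nat
  assumes n_pos: "1 \<le> n" and m_pos: "1 \<le> m"
    and grad: "\<And>i l x. i < n \<Longrightarrow> l < m \<Longrightarrow>
                 (fs i l has_derivative (\<lambda>h. grad i l x \<bullet> h)) (at x)"
    and lip: "\<And>i l x y. i < n \<Longrightarrow> l < m \<Longrightarrow>
                 norm (grad i l x - grad i l y) \<le> L * norm (x - y)"
    and lower: "\<And>i l. i < n \<Longrightarrow> l < m \<Longrightarrow> \<exists>c. \<forall>x. c \<le> fs i l x"
    and W_mix: "mixing_matrix n W"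
    and W_conn: "graph_connected n W"
    and perm: "\<And>s i. i < n \<Longrightarrow> bij_betw (\<pi> s i) {..<m} {..<m}"
    and alpha_pos: "0 < \<alpha>" and alpha_le: "\<alpha> \<le> 1 / (real m * L)"
    and step: "\<And>s l i. l < m \<Longrightarrow> i < n \<Longrightarrow>
                 X s (Suc l) i = (\<Sum>j<n. W i j *\<^sub>R (X s l j - \<alpha> *\<^sub>R grad j (\<pi> s j l) (X s l j)))"
    and epoch: "\<And>s i. i < n \<Longrightarrow> X (Suc s) 0 i = X s m i"
  shows
    "let f = (\<lambda>x. (1 / real n) * (\<Sum>i<n. (1 / real m) * (\<Sum>l<m. fs i l x)));
         gf = (\<lambda>x. (1 / real n) *\<^sub>R (\<Sum>i<n. (1 / real m) *\<^sub>R (\<Sum>l<m. grad i l x)));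
         xbar = (\<lambda>s l. (1 / real n) *\<^sub>R (\<Sum>i<n. X s l i))
     in f (xbar (Suc t) 0)
        \<le> f (xbar t 0) - (\<alpha> * real m / 2) * (norm (gf (xbar t 0)))\<^sup>2
           + (L\<^sup>2 * \<alpha> / real n) * (\<Sum>l<m. \<Sum>i<n. (norm (X t l i - xbar t l))\<^sup>2)
           + \<alpha> * L\<^sup>2 * (\<Sum>l<m. (norm (xbar t l - xbar t 0))\<^sup>2)"
  proof -
  define f where "f = (\<lambda>x. (1 / real n) * (\<Sum>i<n. (1 / real m) * (\<Sum>l<m. fs i l x)))"
  define gf where "gf = (\<lambda>x. (1 / real n) *\<^sub>R (\<Sum>i<n. (1 / real m) *\<^sub>R (\<Sum>l<m. grad i l x)))"
  define xb where "xb = (\<lambda>s l. (1 / real n) *\<^sub>R (\<Sum>i<n. X s l i))"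
  define g where "g = (\<lambda>l j. grad j (\<pi> t j l) (X t l j))"
  have np: "real n > 0" and mp: "real m > 0" using n_pos m_pos by auto
  have Lpos: "L > 0"
  proof (rule ccontr)
    assume "\<not> L > 0"
    then have "1 / (real m * L) \<le> 0" using mp by (simp add: divide_nonpos_nonneg mult_nonneg_nonpos)
    then show False using alpha_pos alpha_le by linarith
  qed
  have aml: "\<alpha> * real m * L \<le> 1"
    using alpha_le mp Lpos by (simp add: field_simps)
  have pim: "\<pi> t j l < m" if "j < n" "l < m" for j l
    using perm[OF that(1), of t] that(2) by (auto dest: bij_betw_imp_surj_on)
  have colsum: "(\<Sum>i<n. W i j) = 1" if "j < n" for j
  proof -
    have "(\<Sum>i<n. W i j) = (\<Sum>i<n. W j i)" using W_mix that unfolding mixing_matrix_def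
      by (intro sum.cong) auto
    also have "\<dots> = 1" using W_mix that unfolding mixing_matrix_def by auto
    finally show ?thesis .
  qed
  have stepA: "xb t (Suc l) = xb t l - \<alpha> *\<^sub>R ((1 / real n) *\<^sub>R (\<Sum>j<n. g l j))" if "l < m" for l
  proof -
    have "(\<Sum>i<n. X t (Suc l) i) = (\<Sum>i<n. \<Sum>j<n. W i j *\<^sub>R (X t l j - \<alpha> *\<^sub>R g l j))"
      using step[OF that] unfolding g_def by simp
    also have "\<dots> = (\<Sum>j<n. \<Sum>i<n. W i j *\<^sub>R (X t l j - \<alpha> *\<^sub>R g l j))" by (rule sum.swap)
    also have "\<dots> = (\<Sum>j<n. (\<Sum>i<n. W i j) *\<^sub>R (X t l j - \<alpha> *\<^sub>R g l j))" by (simp add: scaleR_sum_left)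
    also have "\<dots> = (\<Sum>j<n. (X t l j - \<alpha> *\<^sub>R g l j))" by (intro sum.cong) (auto simp: colsum)
    finally have h: "(\<Sum>i<n. X t (Suc l) i) = (\<Sum>j<n. X t l j) - \<alpha> *\<^sub>R (\<Sum>j<n. g l j)"
      by (simp add: sum_subtractf scaleR_sum_right)
    show ?thesis unfolding xb_def h by (simp add: scaleR_diff_right)
  qed
  define D where "D = (\<Sum>l<m. (1 / real n) *\<^sub>R (\<Sum>j<n. g l j))"
  have stepB: "k \<le> m \<Longrightarrow> xb t k = xb t 0 - \<alpha> *\<^sub>R (\<Sum>l<k. (1 / real n) *\<^sub>R (\<Sum>j<n. g l j))" for k
    by (induction k) (auto simp: stepA scaleR_add_right)
  define x where "x = xb t 0"
  define y where "y = x - \<alpha> *\<^sub>R D"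
  have yeq: "xb (Suc t) 0 = y"
  proof -
    have "xb (Suc t) 0 = xb t m" unfolding xb_def using epoch by simp
    then show ?thesis using stepB[of m] unfolding y_def x_def D_def by simp
  qed
  have desc: "fs i l y \<le> fs i l x + grad i l x \<bullet> (y - x) + L/2 * (norm (y-x))\<^sup>2" if "i < n" "l < m" for i l
    by (rule descent[OF grad[OF that] lip[OF that]])
  have fdesc: "f y \<le> f x + gf x \<bullet> (y - x) + L/2 * (norm (y-x))\<^sup>2"
  proof -
    have "f y \<le> (1 / real n) * (\<Sum>i<n. (1 / real m) * (\<Sum>l<m. fs i l x + grad i l x \<bullet> (y - x) + L/2 * (norm (y-x))\<^sup>2))"
      unfolding f_def using desc np mp
      by (intro mult_left_mono sum_mono) auto
    also have "\<dots> = f x + gf x \<bullet> (y - x) + L/2 * (norm (y-x))\<^sup>2"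
      unfolding f_def gf_def using np mp
      by (simp add: sum.distrib inner_sum_left sum_distrib_left distrib_left)
    finally show ?thesis .
  qed
  define G where "G = gf x"
  define d where "d = (1 / real m) *\<^sub>R D"
  have Geq: "G = (1 / real m) *\<^sub>R (\<Sum>l<m. (1 / real n) *\<^sub>R (\<Sum>j<n. grad j (\<pi> t j l) x))"
  proof -
    have r: "(\<Sum>l<m. grad j (\<pi> t j l) x) = (\<Sum>l<m. grad j l x)" if "j < n" for j
      using sum.reindex_bij_betw[OF perm[OF that, of t], of "\<lambda>l. grad j l x"] by simp
    have "G = (1 / real m) *\<^sub>R (1 / real n) *\<^sub>R (\<Sum>j<n. (\<Sum>l<m. grad j (\<pi> t j l) x))"
      unfolding G_def gf_def using r by (simp add: scaleR_sum_right[symmetric])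
    also have "\<dots> = (1 / real m) *\<^sub>R (\<Sum>l<m. (1 / real n) *\<^sub>R (\<Sum>j<n. grad j (\<pi> t j l) x))"
      by (subst sum.swap) (simp add: scaleR_sum_right)
    finally show ?thesis .
  qed
  define e where "e = (\<lambda>l j. grad j (\<pi> t j l) x - g l j)"
  have Gd: "G - d = (1 / real m) *\<^sub>R (\<Sum>l<m. (1 / real n) *\<^sub>R (\<Sum>j<n. e l j))"
    unfolding Geq d_def D_def e_def
    by (simp add: sum_subtractf scaleR_diff_right)
  have Gdb: "(norm (G - d))\<^sup>2 \<le> (1 / real m) * (\<Sum>l<m. (1 / real n) * (\<Sum>j<n. (norm (e l j))\<^sup>2))"
  proof -
    have "(norm (G - d))\<^sup>2 \<le> (1 / real m) * (\<Sum>l<m. (norm ((1 / real n) *\<^sub>R (\<Sum>j<n. e l j)))\<^sup>2)"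
      unfolding Gd by (rule avg_sq)
    also have "\<dots> \<le> (1 / real m) * (\<Sum>l<m. (1 / real n) * (\<Sum>j<n. (norm (e l j))\<^sup>2))"
      using mp by (intro mult_left_mono sum_mono avg_sq) auto
    finally show ?thesis .
  qed
  have eb: "(norm (e l j))\<^sup>2 \<le> L\<^sup>2 * (2 * (norm (X t l j - xb t l))\<^sup>2 + 2 * (norm (xb t l - x))\<^sup>2)"
    if "l < m" "j < n" for l j
  proof -
    have "norm (e l j) \<le> L * norm (x - X t l j)"
      unfolding e_def g_def using lip[OF that(2) pim[OF that(2) that(1)]] by simp
    then have "(norm (e l j))\<^sup>2 \<le> (L * norm (x - X t l j))\<^sup>2" by (rule power_mono) simp
    also have "\<dots> = L\<^sup>2 * (norm (x - X t l j))\<^sup>2" by (simp add: power_mult_distrib)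
    also have "\<dots> \<le> L\<^sup>2 * (2 * (norm (X t l j - xb t l))\<^sup>2 + 2 * (norm (xb t l - x))\<^sup>2)"
    proof (rule mult_left_mono)
      have "norm (x - X t l j) \<le> norm (X t l j - xb t l) + norm (xb t l - x)"
        using norm_triangle_ineq[of "X t l j - xb t l" "xb t l - x"] by (simp add: norm_minus_commute)
      then have "(norm (x - X t l j))\<^sup>2 \<le> (norm (X t l j - xb t l) + norm (xb t l - x))\<^sup>2"
        by (rule power_mono) simp
      also have "\<dots> \<le> 2 * (norm (X t l j - xb t l))\<^sup>2 + 2 * (norm (xb t l - x))\<^sup>2"
        by (simp add: power2_sum) (smt (verit) sum_squares_bound)
      finally show "(norm (x - X t l j))\<^sup>2 \<le> 2 * (norm (X t l j - xb t l))\<^sup>2 + 2 * (norm (xb t l - x))\<^sup>2" .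
    qed simp
    finally show ?thesis .
  qed
  define A where "A = (\<Sum>l<m. \<Sum>i<n. (norm (X t l i - xb t l))\<^sup>2)"
  define B where "B = (\<Sum>l<m. (norm (xb t l - x))\<^sup>2)"
  have Gdb2: "(norm (G - d))\<^sup>2 \<le> (1 / real m) * (2 * L\<^sup>2 / real n * A + 2 * L\<^sup>2 * B)"
  proof -
    have "(\<Sum>l<m. (1 / real n) * (\<Sum>j<n. (norm (e l j))\<^sup>2))
        \<le> (\<Sum>l<m. (1 / real n) * (\<Sum>j<n. L\<^sup>2 * (2 * (norm (X t l j - xb t l))\<^sup>2 + 2 * (norm (xb t l - x))\<^sup>2)))"
      using np eb by (intro sum_mono mult_left_mono) auto
    also have "\<dots> = 2 * L\<^sup>2 / real n * A + 2 * L\<^sup>2 * B"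
      unfolding A_def B_def using np
      by (simp add: sum.distrib sum_distrib_left distrib_left algebra_simps)
    finally show ?thesis using Gdb mp by (smt (verit) mult_left_mono divide_nonneg_nonneg of_nat_0_le_iff zero_le_one)
  qed
  have key: "f y \<le> f x - (\<alpha> * real m / 2) * (norm G)\<^sup>2 + (\<alpha> * real m / 2) * (norm (G - d))\<^sup>2"
  proof -
    have yx: "y - x = - ((\<alpha> * real m) *\<^sub>R d)" unfolding y_def d_def using mp by simp
    have ng: "(norm (G - d))\<^sup>2 = (norm G)\<^sup>2 - 2 * (G \<bullet> d) + (norm d)\<^sup>2"
      by (simp add: power2_norm_eq_inner inner_diff_left inner_diff_right inner_commute)
    have nd: "(norm (y - x))\<^sup>2 = (\<alpha> * real m)\<^sup>2 * (norm d)\<^sup>2"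
      unfolding yx using alpha_pos mp by (simp add: power_mult_distrib)
    have q: "L / 2 * ((\<alpha> * real m)\<^sup>2 * (norm d)\<^sup>2) \<le> (\<alpha> * real m / 2) * (norm d)\<^sup>2"
    proof -
      have "L * (\<alpha> * real m) \<le> 1" using aml by (simp add: algebra_simps)
      then have "(L * (\<alpha> * real m)) * ((\<alpha> * real m / 2) * (norm d)\<^sup>2) \<le> 1 * ((\<alpha> * real m / 2) * (norm d)\<^sup>2)"
        using alpha_pos mp by (intro mult_right_mono) auto
      then show ?thesis by (simp add: power2_eq_square algebra_simps)
    qed
    show ?thesis using fdesc q unfolding G_def[symmetric] yx nd ng
      by (simp add: algebra_simps)
  qed
  have fin: "f y \<le> f x - (\<alpha> * real m / 2) * (norm G)\<^sup>2 + (L\<^sup>2 * \<alpha> / real n) * A + \<alpha> * L\<^sup>2 * B"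
  proof -
    have "(\<alpha> * real m / 2) * (norm (G - d))\<^sup>2 \<le> (\<alpha> * real m / 2) * ((1 / real m) * (2 * L\<^sup>2 / real n * A + 2 * L\<^sup>2 * B))"
      using Gdb2 alpha_pos mp by (intro mult_left_mono) auto
    also have "\<dots> = (L\<^sup>2 * \<alpha> / real n) * A + \<alpha> * L\<^sup>2 * B" using mp by (simp add: field_simps)
    finally show ?thesis using key by linarith
  qed
  show ?thesis
    using fin yeq unfolding Let_def f_def[symmetric] gf_def[symmetric] xb_def[symmetric] G_def x_def A_def B_def
    by simp
qed

end
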